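(* For every integer $n\geq 1$ there exists a non-empty crowded T$_1$ space $Y_n$ that is hereditarily $(n+1)$-irresolvable and has a crowded dense $n$-partition.
   Context: A space is crowded if it has no isolated points; a subset $S$ of $X$ is crowded in $X$ if it has no isolated points as a subspace. A $k$-partition of $X$ is a family of exactly $k$ non-empty, pairwise disjoint subsets (cells) with union $X$; it is dense if each cell is dense in $X$, and crowded if each cell is crowded. A space is $k$-resolvable if it has $k$ pairwise disjoint non-empty dense subsets, $k$-irresolvable otherwise, and hereditarily $k$-irresolvable if every non-empty subspace is $k$-irresolvable. *)

theory Defs
  imports "HOL-Analysis.Analysis"
begin

definition isolated_pt_in :: "'a topology \<Rightarrow> 'a set \<Rightarrow> 'a \<Rightarrow> bool" where
  "isolated_pt_in X S x \<longleftrightarrow> x \<in> S \<and> (\<exists>U. openin X U \<and> U \<inter> S = {x})"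

definition crowded_in :: "'a topology \<Rightarrow> 'a set \<Rightarrow> bool" where
  "crowded_in X S \<longleftrightarrow> S \<subseteq> topspace X \<and> (\<forall>x\<in>S. \<not> isolated_pt_in X S x)"

definition crowded_space :: "'a topology \<Rightarrow> bool" where
  "crowded_space X \<longleftrightarrow> crowded_in X (topspace X)"

definition dense_in :: "'a topology \<Rightarrow> 'a set \<Rightarrow> bool" where
  "dense_in X D \<longleftrightarrow> D \<subseteq> topspace X \<and> X closure_of D = topspace X"

definition k_partition :: "'a topology \<Rightarrow> nat \<Rightarrow> 'a set set \<Rightarrow> bool" where
  "k_partition X k P \<longleftrightarrow> finite P \<and> card P = k \<and> (\<forall>C\<in>P. C \<noteq> {}) \<and> disjoint P
     \<and> \<Union>P = topspace X"

definition dense_partition :: "'a topology \<Rightarrow> 'a set set \<Rightarrow> bool" where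
  "dense_partition X P \<longleftrightarrow> (\<forall>C\<in>P. dense_in X C)"

definition crowded_partition :: "'a topology \<Rightarrow> 'a set set \<Rightarrow> bool" where
  "crowded_partition X P \<longleftrightarrow> (\<forall>C\<in>P. crowded_in X C)"

definition k_resolvable :: "'a topology \<Rightarrow> nat \<Rightarrow> bool" where
  "k_resolvable X k \<longleftrightarrow> (\<exists>D::'a set set. finite D \<and> card D = k \<and> disjoint D \<and>
     (\<forall>A\<in>D. A \<noteq> {} \<and> dense_in X A))"

definition hereditarily_k_irresolvable :: "'a topology \<Rightarrow> nat \<Rightarrow> bool" where
  "hereditarily_k_irresolvable X k \<longleftrightarrow>
     (\<forall>S. S \<subseteq> topspace X \<and> S \<noteq> {} \<longrightarrow> \<not> k_resolvable (subtopology X S) k)"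

end

theory Submission
  imports Defs
begin


lemma exists_max:
  fixes C :: "'a set" assumes infC: "infinite C"
  shows "\<exists>\<beta>. \<beta> \<subseteq> Pow C \<and> C \<in> \<beta> \<and> (\<forall>U\<in>\<beta>. \<forall>V\<in>\<beta>. U \<inter> V \<in> \<beta>) \<and> (\<forall>U\<in>\<beta>. \<forall>x. U - {x} \<in> \<beta>)
     \<and> (\<forall>x. {x} \<notin> \<beta>) \<and> (\<forall>D. D \<subseteq> C \<and> (\<forall>B\<in>\<beta>. B \<noteq> {} \<longrightarrow> B \<inter> D \<noteq> {}) \<longrightarrow> D \<in> \<beta>)"
proof -
  define \<tau>0 where "\<tau>0 = {U. U \<subseteq> C \<and> finite (C - U)}"
  define A where "A = {\<beta>. \<beta> \<subseteq> Pow C \<and> \<tau>0 \<subseteq> \<beta> \<and> (\<forall>U\<in>\<beta>. \<forall>V\<in>\<beta>. U \<inter> V \<in> \<beta>) \<and> (\<forall>x. {x} \<notin> \<beta>)}"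
  have A_iff: "\<beta> \<in> A \<longleftrightarrow> \<beta> \<subseteq> Pow C \<and> \<tau>0 \<subseteq> \<beta> \<and> (\<forall>U\<in>\<beta>. \<forall>V\<in>\<beta>. U \<inter> V \<in> \<beta>) \<and> (\<forall>x. {x} \<notin> \<beta>)" for \<beta>
    unfolding A_def by simp
  have t0A: "\<tau>0 \<in> A"
  proof -
    have h1: "\<tau>0 \<subseteq> Pow C" unfolding \<tau>0_def by auto
    have h3: "\<forall>U\<in>\<tau>0. \<forall>V\<in>\<tau>0. U \<inter> V \<in> \<tau>0"
    proof (intro ballI)
      fix U V assume "U \<in> \<tau>0" "V \<in> \<tau>0"
      moreover have "C - (U \<inter> V) = (C - U) \<union> (C - V)" by blast
      ultimately show "U \<inter> V \<in> \<tau>0" unfolding \<tau>0_def by auto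
    qed
    have h4: "\<forall>x. {x} \<notin> \<tau>0"
    proof (intro allI notI)
      fix x assume "{x} \<in> \<tau>0"
      hence "finite (C - {x})" unfolding \<tau>0_def by auto
      hence "finite C" by simp
      thus False using infC by simp
    qed
    show ?thesis unfolding A_iff using h1 h3 h4 by simp
  qed
  have "\<forall>Ch\<in>chains A. \<exists>U\<in>A. \<forall>X\<in>Ch. X \<subseteq> U"
  proof
    fix Ch assume ch: "Ch \<in> chains A"
    define U where "U = \<tau>0 \<union> \<Union>Ch"
    have sub: "Ch \<subseteq> A" and cc: "\<And>a b. a \<in> Ch \<Longrightarrow> b \<in> Ch \<Longrightarrow> a \<subseteq> b \<or> b \<subseteq> a"
      using ch unfolding chains_def chain_subset_def by auto
    have bA: "b \<in> A" if "b = \<tau>0 \<or> b \<in> Ch" for b using that sub t0A by blast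
    have inU: "\<exists>b. (b = \<tau>0 \<or> b \<in> Ch) \<and> P \<in> b" if "P \<in> U" for P using that unfolding U_def by blast
    have "U \<in> A"
    proof -
      have h1: "U \<subseteq> Pow C"
      proof
        fix P assume "P \<in> U"
        then obtain b where b: "b = \<tau>0 \<or> b \<in> Ch" "P \<in> b" using inU by blast
        have "b \<subseteq> Pow C" using bA[OF b(1)] unfolding A_iff by simp
        thus "P \<in> Pow C" using b(2) by blast
      qed
      have h2: "\<tau>0 \<subseteq> U" unfolding U_def by auto
      have h4: "\<forall>x. {x} \<notin> U"
      proof (intro allI notI)
        fix x assume "{x} \<in> U"
        then obtain b where b: "b = \<tau>0 \<or> b \<in> Ch" "{x} \<in> b" using inU by blast
        have "\<forall>x. {x} \<notin> b" using bA[OF b(1)] unfolding A_iff by simp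
        thus False using b(2) by blast
      qed
      have h3: "\<forall>P\<in>U. \<forall>Q\<in>U. P \<inter> Q \<in> U"
      proof (intro ballI)
        fix P Q assume "P \<in> U" "Q \<in> U"
        have "\<exists>b. (b = \<tau>0 \<or> b \<in> Ch) \<and> P \<in> b \<and> Q \<in> b"
        proof -
          obtain b1 where b1: "b1 = \<tau>0 \<or> b1 \<in> Ch" "P \<in> b1" using inU \<open>P \<in> U\<close> by blast
          obtain b2 where b2: "b2 = \<tau>0 \<or> b2 \<in> Ch" "Q \<in> b2" using inU \<open>Q \<in> U\<close> by blast
          have t0s: "\<tau>0 \<subseteq> b" if "b \<in> Ch" for b
          proof -
            have "b \<in> A" using that sub by blast
            thus ?thesis unfolding A_iff by simp
          qed
          show ?thesis
          proof (cases "b1 = \<tau>0")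
            case True
            thus ?thesis using b2 t0s[of b2] b1 by blast
          next
            case False
            hence "b1 \<in> Ch" using b1 by simp
            show ?thesis
            proof (cases "b2 = \<tau>0")
              case True
              thus ?thesis using \<open>b1 \<in> Ch\<close> t0s[of b1] b1 b2 by blast
            next
              case False
              hence "b2 \<in> Ch" using b2 by simp
              from cc[OF \<open>b1 \<in> Ch\<close> this] show ?thesis using b1 b2 \<open>b1 \<in> Ch\<close> \<open>b2 \<in> Ch\<close> by blast
            qed
          qed
        qed
        then obtain b where b: "b = \<tau>0 \<or> b \<in> Ch" "P \<in> b" "Q \<in> b" by blast
        have "\<forall>U\<in>b. \<forall>V\<in>b. U \<inter> V \<in> b" using bA[OF b(1)] unfolding A_iff by simp
        hence "P \<inter> Q \<in> b" using b by blast
        thus "P \<inter> Q \<in> U" using b(1) unfolding U_def by blast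
      qed
      show ?thesis unfolding A_iff using h1 h2 h3 h4 by simp
    qed
    moreover have "\<forall>X\<in>Ch. X \<subseteq> U" unfolding U_def by blast
    ultimately show "\<exists>U\<in>A. \<forall>X\<in>Ch. X \<subseteq> U" by blast
  qed
  from Zorn_Lemma2[OF this] obtain M where MA: "M \<in> A" and Mmax: "\<forall>X\<in>A. M \<subseteq> X \<longrightarrow> X = M" by blast
  have MP: "M \<subseteq> Pow C" and Mt: "\<tau>0 \<subseteq> M" and Mi: "\<forall>U\<in>M. \<forall>V\<in>M. U \<inter> V \<in> M" and Ms: "\<forall>x. {x} \<notin> M"
    using MA unfolding A_iff by auto
  have CM: "C \<in> M" using Mt unfolding \<tau>0_def by auto
  have Mrem: "U - {x} \<in> M" if "U \<in> M" for U x
  proof -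
    have "C - {x} \<in> \<tau>0" unfolding \<tau>0_def by (simp add: Diff_Diff_Int)
    hence "C - {x} \<in> M" using Mt by blast
    moreover have "U - {x} = U \<inter> (C - {x})" using that MP by auto
    ultimately show ?thesis using Mi that by metis
  qed
  have Msub: "D \<in> M" if D: "D \<subseteq> C" "\<forall>B\<in>M. B \<noteq> {} \<longrightarrow> B \<inter> D \<noteq> {}" for D
  proof -
    define M' where "M' = M \<union> {B \<inter> D | B. B \<in> M}"
    have inM': "\<exists>B\<in>M. P = B \<or> P = B \<inter> D" if "P \<in> M'" for P using that unfolding M'_def by blast
    have M'I1: "B \<in> M'" if "B \<in> M" for B using that unfolding M'_def by blast
    have M'I2: "B \<inter> D \<in> M'" if "B \<in> M" for B using that unfolding M'_def by blast
    have "M' \<in> A"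
    proof -
      have h1: "M' \<subseteq> Pow C" using MP D unfolding M'_def by auto
      have h2: "\<tau>0 \<subseteq> M'" using Mt unfolding M'_def by auto
      have h3: "\<forall>P\<in>M'. \<forall>Q\<in>M'. P \<inter> Q \<in> M'"
      proof (intro ballI)
        fix P Q assume "P \<in> M'" "Q \<in> M'"
        then obtain B1 B2 where B: "B1 \<in> M" "P = B1 \<or> P = B1 \<inter> D" "B2 \<in> M" "Q = B2 \<or> Q = B2 \<inter> D"
          using inM' by meson
        have B12: "B1 \<inter> B2 \<in> M" using Mi B by blast
        have "P \<inter> Q = B1 \<inter> B2 \<or> P \<inter> Q = (B1 \<inter> B2) \<inter> D" using B(2,4) by blast
        thus "P \<inter> Q \<in> M'" using M'I1[OF B12] M'I2[OF B12] by metis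
      qed
      have h4: "\<forall>x. {x} \<notin> M'"
      proof (intro allI notI)
        fix x assume "{x} \<in> M'"
        then obtain B where B: "B \<in> M" "{x} = B \<or> {x} = B \<inter> D" using inM' by meson
        have "{x} \<noteq> B" using Ms B(1) by metis
        hence B2: "{x} = B \<inter> D" using B(2) by simp
        have "B \<noteq> {x}" using Ms B by metis
        hence "B - {x} \<noteq> {}" using B2 by auto
        moreover have "B - {x} \<in> M" using Mrem B by auto
        ultimately have "(B - {x}) \<inter> D \<noteq> {}" using D by auto
        thus False using B2 by auto
      qed
      show ?thesis unfolding A_iff using h1 h2 h3 h4 by simp
    qed
    moreover have "M \<subseteq> M'" unfolding M'_def by blast
    ultimately have "M' = M" using Mmax by blast
    hence "C \<inter> D \<in> M" using M'I2[OF CM] by simp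
    thus ?thesis using D by (simp add: Int_absorb1)
  qed
  have Msub': "\<forall>D. D \<subseteq> C \<and> (\<forall>B\<in>M. B \<noteq> {} \<longrightarrow> B \<inter> D \<noteq> {}) \<longrightarrow> D \<in> M" using Msub by blast
  have Mrem': "\<forall>U\<in>M. \<forall>x. U - {x} \<in> M" using Mrem by blast
  show ?thesis
    apply (rule exI[of _ M])
    using MP CM Mi Mrem' Ms Msub' by simp
qed




lemma diff_finite_in:
  assumes rem: "\<forall>U\<in>\<beta>. \<forall>x. U - {x} \<in> \<beta>" and "finite F" "B \<in> \<beta>"
  shows "B - F \<in> \<beta>"
  using assms(2,3)
proof (induction F rule: finite_induct)
  case empty thus ?case by simp
next
  case (insert a F)
  have "B - insert a F = (B - F) - {a}" by blast
  thus ?case using insert rem by metis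
qed

lemma nonempty_infinite:
  assumes rem: "\<forall>U\<in>\<beta>. \<forall>x. U - {x} \<in> \<beta>" and sing: "\<forall>x. {x} \<notin> \<beta>" and "B \<in> \<beta>" "B \<noteq> {}"
  shows "infinite B"
proof
  assume fin: "finite B"
  obtain x where x: "x \<in> B" using assms(4) by blast
  have "B - (B - {x}) \<in> \<beta>" using diff_finite_in[OF rem _ assms(3)] fin by simp
  moreover have "B - (B - {x}) = {x}" using x by blast
  ultimately show False using sing by metis
qed



lemma open_in_T:
  assumes CB: "C \<in> \<beta>" and bi: "\<forall>U\<in>\<beta>. \<forall>V\<in>\<beta>. U \<inter> V \<in> \<beta>" and bP: "\<beta> \<subseteq> Pow C"
    and sm: "\<forall>D. D \<subseteq> C \<and> (\<forall>B\<in>\<beta>. B \<noteq> {} \<longrightarrow> B \<inter> D \<noteq> {}) \<longrightarrow> D \<in> \<beta>"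
    and TC: "T \<subseteq> C" and AT: "A \<subseteq> T" and dA: "\<forall>t\<in>T. \<forall>B\<in>\<beta>. t \<in> B \<longrightarrow> B \<inter> A \<noteq> {}"
  shows "\<exists>Q\<in>\<beta>. Q \<inter> T = A"
proof -
  define G where "G = \<Union>{B\<in>\<beta>. B \<inter> T = {}}"
  define E where "E = A \<union> G"
  have "E \<subseteq> C" using bP TC AT unfolding E_def G_def by blast
  moreover have "\<forall>B\<in>\<beta>. B \<noteq> {} \<longrightarrow> B \<inter> E \<noteq> {}"
  proof (intro ballI impI)
    fix B assume B: "B \<in> \<beta>" "B \<noteq> {}"
    show "B \<inter> E \<noteq> {}"
    proof (cases "B \<inter> T = {}")
      case True
      hence "B \<subseteq> G" using B unfolding G_def by blast
      thus ?thesis using B unfolding E_def by blast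
    next
      case False
      then obtain t where "t \<in> B" "t \<in> T" by blast
      thus ?thesis using dA B unfolding E_def by blast
    qed
  qed
  ultimately have "E \<in> \<beta>" using sm by blast
  moreover have "E \<inter> T = A" using AT unfolding E_def G_def by blast
  ultimately show ?thesis by blast
qed



lemma fin_inter:
  assumes CB: "C \<in> \<beta>" and bi: "\<forall>U\<in>\<beta>. \<forall>V\<in>\<beta>. U \<inter> V \<in> \<beta>" and bP: "\<beta> \<subseteq> Pow C"
    and sm: "\<forall>D. D \<subseteq> C \<and> (\<forall>B\<in>\<beta>. B \<noteq> {} \<longrightarrow> B \<inter> D \<noteq> {}) \<longrightarrow> D \<in> \<beta>"
    and TC: "T \<subseteq> C" and fin: "finite F"
    and dF: "\<forall>A\<in>F. A \<subseteq> T \<and> (\<forall>t\<in>T. \<forall>B\<in>\<beta>. t \<in> B \<longrightarrow> B \<inter> A \<noteq> {})"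
  shows "(\<exists>Q\<in>\<beta>. Q \<inter> T = T \<inter> \<Inter>F) \<and> (\<forall>t\<in>T. \<forall>B\<in>\<beta>. t \<in> B \<longrightarrow> B \<inter> (T \<inter> \<Inter>F) \<noteq> {})"
  using fin dF
proof (induction F rule: finite_induct)
  case empty
  have "C \<inter> T = T \<inter> \<Inter>{}" using TC by auto
  thus ?case using CB by auto
next
  case (insert A F)
  from insert.IH insert.prems obtain Q where Q: "Q \<in> \<beta>" "Q \<inter> T = T \<inter> \<Inter>F"
    and dI: "\<forall>t\<in>T. \<forall>B\<in>\<beta>. t \<in> B \<longrightarrow> B \<inter> (T \<inter> \<Inter>F) \<noteq> {}" by auto
  have AT: "A \<subseteq> T" and dA: "\<forall>t\<in>T. \<forall>B\<in>\<beta>. t \<in> B \<longrightarrow> B \<inter> A \<noteq> {}" using insert.prems by auto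
  obtain QA where QA: "QA \<in> \<beta>" "QA \<inter> T = A" using open_in_T[OF CB bi bP sm TC AT dA] by blast
  have "QA \<inter> Q \<in> \<beta>" using bi QA Q by blast
  moreover have "(QA \<inter> Q) \<inter> T = T \<inter> \<Inter>(insert A F)" using QA Q by auto
  moreover have "\<forall>t\<in>T. \<forall>B\<in>\<beta>. t \<in> B \<longrightarrow> B \<inter> (T \<inter> \<Inter>(insert A F)) \<noteq> {}"
  proof (intro ballI impI)
    fix t B assume t: "t \<in> T" "B \<in> \<beta>" "t \<in> B"
    obtain y where y: "y \<in> B" "y \<in> T \<inter> \<Inter>F" using dI t by blast
    have yQ: "y \<in> Q" using y Q(2) by blast
    have "B \<inter> Q \<in> \<beta>" using bi t Q by blast
    moreover have yT: "y \<in> T" and yBQ: "y \<in> B \<inter> Q" using y yQ by auto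
    ultimately have "(B \<inter> Q) \<inter> A \<noteq> {}" using bspec[OF bspec[OF dA yT] \<open>B \<inter> Q \<in> \<beta>\<close>] yBQ by simp
    then obtain z where z: "z \<in> B \<inter> Q" "z \<in> A" by blast
    have "z \<in> T \<inter> \<Inter>F" using z AT Q(2) by blast
    thus "B \<inter> (T \<inter> \<Inter>(insert A F)) \<noteq> {}" using z by blast
  qed
  ultimately show ?case by blast
qed




lemma frac_shift: "x \<in> {0<..<(1::real)} \<Longrightarrow> frac (x + real i) = x"
proof -
  assume "x \<in> {0<..<(1::real)}"
  hence "frac x = x" by (simp add: frac_eq)
  moreover have "frac (x + real i) = frac x"
    using frac_add_of_int_right[of x "int i"] by simp
  ultimately show ?thesis by simp
qed

lemma shift_inj:
  assumes "x \<in> {0<..<(1::real)}" "y \<in> {0<..<(1::real)}" "x + real i = y + real j"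
  shows "i = j \<and> x = y"
proof -
  have "x = y" using frac_shift[OF assms(1), of i] frac_shift[OF assms(2), of j] assms(3) by simp
  with assms(3) show ?thesis by simp
qed

theorem theorem4:
  fixes n :: nat
  assumes "n \<ge> 1"
  shows "\<exists>Y :: real topology. topspace Y \<noteq> {} \<and> crowded_space Y \<and> t1_space Y \<and>
           hereditarily_k_irresolvable Y (n + 1) \<and>
           (\<exists>P. k_partition Y n P \<and> crowded_partition Y P \<and> dense_partition Y P)"
proof -
  define C where "C = {0<..<(1::real)}"
  have infC: "infinite C" unfolding C_def by (simp add: infinite_Ioo)
  obtain \<beta> where H: "\<beta> \<subseteq> Pow C \<and> C \<in> \<beta> \<and> (\<forall>U\<in>\<beta>. \<forall>V\<in>\<beta>. U \<inter> V \<in> \<beta>) \<and> (\<forall>U\<in>\<beta>. \<forall>x. U - {x} \<in> \<beta>)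
     \<and> (\<forall>x. {x} \<notin> \<beta>) \<and> (\<forall>D. D \<subseteq> C \<and> (\<forall>B\<in>\<beta>. B \<noteq> {} \<longrightarrow> B \<inter> D \<noteq> {}) \<longrightarrow> D \<in> \<beta>)"
    using exists_max[OF infC] by (elim exE) assumption
  note bP = H[THEN conjunct1]
  note CB = H[THEN conjunct2, THEN conjunct1]
  note bi = H[THEN conjunct2, THEN conjunct2, THEN conjunct1]
  note rem = H[THEN conjunct2, THEN conjunct2, THEN conjunct2, THEN conjunct1]
  note sing = H[THEN conjunct2, THEN conjunct2, THEN conjunct2, THEN conjunct2, THEN conjunct1]
  note sm = H[THEN conjunct2, THEN conjunct2, THEN conjunct2, THEN conjunct2, THEN conjunct2]
  define cell where "cell i = (\<lambda>x. x + real i) ` C" for i :: nat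
  define K where "K = (\<Union>i<n. cell i)"
  define L where "L B = {q\<in>K. frac q \<in> B}" for B
  define openY where "openY W \<longleftrightarrow> W \<subseteq> K \<and> (\<forall>p\<in>W. \<exists>B\<in>\<beta>. \<exists>F. finite F \<and> frac p \<in> B \<and> p \<notin> F \<and> L B - F \<subseteq> W)" for W
  have fracK: "frac p \<in> C" if pK: "p \<in> K" for p
  proof -
    obtain i x where "x \<in> C" "p = x + real i" using pK unfolding K_def cell_def by blast
    thus ?thesis using frac_shift[of x i] unfolding C_def by simp
  qed
  have ist: "istopology openY"
    unfolding istopology_def
  proof (intro conjI allI impI)
    fix S T assume S: "openY S" and T: "openY T"
    show "openY (S \<inter> T)"
      unfolding openY_def
    proof (intro conjI ballI)
      show "S \<inter> T \<subseteq> K" using S unfolding openY_def by blast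
      fix p assume p: "p \<in> S \<inter> T"
      obtain B1 F1 where 1: "B1 \<in> \<beta>" "finite F1" "frac p \<in> B1" "p \<notin> F1" "L B1 - F1 \<subseteq> S"
        using S p unfolding openY_def by blast
      obtain B2 F2 where 2: "B2 \<in> \<beta>" "finite F2" "frac p \<in> B2" "p \<notin> F2" "L B2 - F2 \<subseteq> T"
        using T p unfolding openY_def by blast
      have "B1 \<inter> B2 \<in> \<beta>" using bi 1 2 by blast
      moreover have "L (B1 \<inter> B2) - (F1 \<union> F2) \<subseteq> S \<inter> T" using 1 2 unfolding L_def by blast
      ultimately show "\<exists>B\<in>\<beta>. \<exists>F. finite F \<and> frac p \<in> B \<and> p \<notin> F \<and> L B - F \<subseteq> S \<inter> T"
        using 1 2 by (intro bexI[of _ "B1 \<inter> B2"] exI[of _ "F1 \<union> F2"]) auto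
    qed
  next
    fix \<K> assume H: "\<forall>S\<in>\<K>. openY S"
    show "openY (\<Union>\<K>)"
      unfolding openY_def
    proof (intro conjI ballI)
      show "\<Union>\<K> \<subseteq> K" using H unfolding openY_def by blast
      fix p assume "p \<in> \<Union>\<K>"
      then obtain S where S: "S \<in> \<K>" "p \<in> S" by blast
      then obtain B F where "B \<in> \<beta>" "finite F" "frac p \<in> B" "p \<notin> F" "L B - F \<subseteq> S"
        using H unfolding openY_def by blast
      thus "\<exists>B\<in>\<beta>. \<exists>F. finite F \<and> frac p \<in> B \<and> p \<notin> F \<and> L B - F \<subseteq> \<Union>\<K>" using S by blast
    qed
  qed
  define Y where "Y = topology openY"
  have oY: "openin Y = openY" unfolding Y_def using ist by simp
  have LC: "L C = K" unfolding L_def using fracK by blast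
  have KY: "openY K" unfolding openY_def
    using CB fracK LC by (intro conjI ballI) (auto intro!: bexI[of _ C] exI[of _ "{}"])
  have tY: "topspace Y = K"
  proof -
    have "topspace Y = \<Union>{W. openY W}" unfolding topspace_def oY by simp
    also have "\<dots> = K" using KY unfolding openY_def by blast
    finally show ?thesis .
  qed
  have LB_open: "openY (L B - F)" if "B \<in> \<beta>" "finite F" for B F
    unfolding openY_def
  proof (intro conjI ballI)
    show "L B - F \<subseteq> K" unfolding L_def by blast
    fix p assume "p \<in> L B - F"
    thus "\<exists>B'\<in>\<beta>. \<exists>F'. finite F' \<and> frac p \<in> B' \<and> p \<notin> F' \<and> L B' - F' \<subseteq> L B - F"
      using that unfolding L_def by blast
  qed
  have big: "infinite (W \<inter> cell i)" if W: "openY W" "p \<in> W" and i: "i < n" for W p i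
  proof -
    obtain B F where BF: "B \<in> \<beta>" "finite F" "frac p \<in> B" "p \<notin> F" "L B - F \<subseteq> W"
      using W unfolding openY_def by blast
    have infB: "infinite B" using nonempty_infinite[OF rem sing BF(1)] BF(3) by blast
    have BC: "B \<subseteq> C" using bP BF(1) by blast
    have sub: "(\<lambda>x. x + real i) ` B - F \<subseteq> W \<inter> cell i"
    proof
      fix q assume q: "q \<in> (\<lambda>x. x + real i) ` B - F"
      then obtain x where x: "x \<in> B" "q = x + real i" by blast
      have "x \<in> C" using x BC by blast
      hence qc: "q \<in> cell i" unfolding cell_def using x by blast
      hence "q \<in> K" unfolding K_def using i by blast
      moreover have "frac q = x" using frac_shift \<open>x \<in> C\<close> x unfolding C_def by blast
      ultimately have "q \<in> L B - F" using q x unfolding L_def by blast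
      thus "q \<in> W \<inter> cell i" using BF qc by blast
    qed
    have "inj_on (\<lambda>x. x + real i) B" by (simp add: inj_on_def)
    hence "infinite ((\<lambda>x. x + real i) ` B)" using infB finite_imageD by blast
    hence "infinite ((\<lambda>x. x + real i) ` B - F)" using BF(2) by simp
    thus ?thesis using sub finite_subset by blast
  qed
  have cellK: "cell i \<subseteq> K" if "i < n" for i using that unfolding K_def by blast
  have cell_ne: "cell i \<noteq> {}" for i using infC unfolding cell_def by auto
  have cell_disj: "cell i \<inter> cell j = {}" if "i \<noteq> j" for i j
    using that shift_inj unfolding cell_def C_def by fastforce
  define P where "P = cell ` {..<n}"
  show ?thesis
  proof (intro exI[of _ Y] conjI)
    have n0: "0 < n" using assms by simp
    have "K \<noteq> {}" using cellK[OF n0] cell_ne[of 0] by blast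
    thus "topspace Y \<noteq> {}" using tY by simp
    show "crowded_space Y"
      unfolding crowded_space_def crowded_in_def isolated_pt_in_def
    proof (intro conjI ballI notI)
      show "topspace Y \<subseteq> topspace Y" by simp
      fix x assume "x \<in> topspace Y" "x \<in> topspace Y \<and> (\<exists>U. openin Y U \<and> U \<inter> topspace Y = {x})"
      then obtain U where U: "openY U" "U \<inter> K = {x}" using oY tY by auto
      have "U = {x}" using U unfolding openY_def by blast
      hence "infinite ({x} \<inter> cell 0)" using big[OF U(1), of x 0] assms by auto
      thus False by simp
    qed
    show "t1_space Y"
      unfolding t1_space_def
    proof (intro ballI impI)
      fix x y assume "x \<in> topspace Y" "y \<in> topspace Y" "x \<noteq> y"
      moreover have "L C - {y} = K - {y}" using LC by simp
      ultimately show "\<exists>U. openin Y U \<and> x \<in> U \<and> y \<notin> U"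
        using LB_open[OF CB, of "{y}"] oY tY by (intro exI[of _ "K - {y}"]) auto
    qed
    have kp1: "finite P" unfolding P_def by simp
    have "inj_on cell {..<n}"
      by (rule inj_onI) (metis cell_disj cell_ne Int_absorb)
    hence kp2: "card P = n" unfolding P_def by (simp add: card_image)
    have kp3: "\<forall>C\<in>P. C \<noteq> {}" using cell_ne unfolding P_def by blast
    have kp4: "disjoint P" unfolding P_def pairwise_def disjnt_def
    proof (intro ballI impI)
      fix a b assume a: "a \<in> cell ` {..<n}" and b: "b \<in> cell ` {..<n}" and ab: "a \<noteq> b"
      obtain i where i: "a = cell i" using a by blast
      obtain j where j: "b = cell j" using b by blast
      have "i \<noteq> j" using ab i j by blast
      thus "a \<inter> b = {}" using cell_disj i j by simp
    qed
    have kp5: "\<Union>P = topspace Y" unfolding P_def tY K_def by simp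
    have kpY: "k_partition Y n P"
      unfolding k_partition_def by (intro conjI kp1 kp2 kp3 kp4 kp5)
    have cpY: "crowded_partition Y P"
      unfolding crowded_partition_def crowded_in_def isolated_pt_in_def
    proof (intro ballI conjI notI)
      fix D assume "D \<in> P"
      then obtain i where i: "i < n" "D = cell i" unfolding P_def by blast
      show "D \<subseteq> topspace Y" using i cellK tY by blast
      fix x assume "x \<in> D \<and> (\<exists>U. openin Y U \<and> U \<inter> D = {x})"
      then obtain U where U: "openY U" "U \<inter> cell i = {x}" "x \<in> D" using oY i by auto
      have "x \<in> U" using U by blast
      thus False using big[OF U(1) _ i(1)] U(2) by simp
    qed
    have dpY: "dense_partition Y P"
      unfolding dense_partition_def dense_in_def
    proof (intro ballI conjI)
      fix D assume "D \<in> P"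
      then obtain i where i: "i < n" "D = cell i" unfolding P_def by blast
      show "D \<subseteq> topspace Y" using i cellK tY by blast
      show "Y closure_of D = topspace Y"
        unfolding dense_intersects_open
      proof (intro allI impI)
        fix T assume T: "openin Y T \<and> T \<noteq> {}"
        then obtain p where "p \<in> T" by blast
        hence "infinite (T \<inter> cell i)" using big[of T p i] T oY i by simp
        thus "D \<inter> T \<noteq> {}" using i by (metis finite.emptyI inf_commute)
      qed
    qed
    show "\<exists>P. k_partition Y n P \<and> crowded_partition Y P \<and> dense_partition Y P"
      using kpY cpY dpY by blast
    show "hereditarily_k_irresolvable Y (n + 1)"
      unfolding hereditarily_k_irresolvable_def k_resolvable_def
    proof (intro allI impI notI)
      fix S assume S: "S \<subseteq> topspace Y \<and> S \<noteq> {}"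
      assume "\<exists>D. finite D \<and> card D = n + 1 \<and> disjoint D \<and> (\<forall>A\<in>D. A \<noteq> {} \<and> dense_in (subtopology Y S) A)"
      then obtain D where D: "finite D" "card D = n + 1" "disjoint D"
        "\<forall>A\<in>D. A \<noteq> {} \<and> dense_in (subtopology Y S) A" by blast
      have SK: "S \<subseteq> K" using S tY by simp
      have tS: "topspace (subtopology Y S) = S" using SK tY by (simp add: Int_absorb1)
      define T where "T = frac ` S"
      have TC: "T \<subseteq> C" using SK fracK unfolding T_def by blast
      have dF: "\<forall>A'\<in>(\<lambda>A. frac ` A) ` D. A' \<subseteq> T \<and> (\<forall>t\<in>T. \<forall>B\<in>\<beta>. t \<in> B \<longrightarrow> B \<inter> A' \<noteq> {})"
      proof (intro ballI conjI impI)
        fix A' assume "A' \<in> (\<lambda>A. frac ` A) ` D"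
        then obtain A where A: "A \<in> D" "A' = frac ` A" by blast
        have AS: "A \<subseteq> S" and cl: "subtopology Y S closure_of A = S"
          using D(4) A(1) tS unfolding dense_in_def by auto
        show "A' \<subseteq> T" using AS A unfolding T_def by blast
        fix t B assume t: "t \<in> T" "B \<in> \<beta>" "t \<in> B"
        then obtain s where s: "s \<in> S" "t = frac s" unfolding T_def by blast
        have "openin Y (L B - {})" using LB_open[OF t(2), of "{}"] oY by simp
        hence "openin (subtopology Y S) (L B \<inter> S)" by (simp add: openin_subtopology_Int)
        moreover have "s \<in> L B \<inter> S" using s SK t unfolding L_def by blast
        moreover have "s \<in> subtopology Y S closure_of A" using cl s by simp
        ultimately obtain y where "y \<in> A" "y \<in> L B \<inter> S" unfolding in_closure_of by blast
        thus "B \<inter> A' \<noteq> {}" using A unfolding L_def by blast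
      qed
      have "finite ((\<lambda>A. frac ` A) ` D)" using D(1) by simp
      from fin_inter[OF CB bi bP sm TC this dF]
      have dd: "\<forall>t\<in>T. \<forall>B\<in>\<beta>. t \<in> B \<longrightarrow> B \<inter> (T \<inter> \<Inter>((\<lambda>A. frac ` A) ` D)) \<noteq> {}" by (rule conjunct2)
      obtain t where tT: "t \<in> T" using S unfolding T_def by blast
      have "t \<in> C" using tT TC by blast
      hence "C \<inter> (T \<inter> \<Inter>((\<lambda>A. frac ` A) ` D)) \<noteq> {}" using bspec[OF bspec[OF dd tT] CB] by simp
      then obtain x where "x \<in> T \<inter> \<Inter>((\<lambda>A. frac ` A) ` D)" by blast
      hence x: "x \<in> T" "\<forall>A\<in>D. x \<in> frac ` A" by auto
      have "\<forall>A\<in>D. \<exists>a. a \<in> A \<and> frac a = x" using x by blast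
      then obtain g where g: "\<And>A. A \<in> D \<Longrightarrow> g A \<in> A \<and> frac (g A) = x" by metis
      have injg: "inj_on g D"
      proof (rule inj_onI)
        fix A1 A2 assume "A1 \<in> D" "A2 \<in> D" "g A1 = g A2"
        show "A1 = A2"
        proof (rule ccontr)
          assume "A1 \<noteq> A2"
          hence "A1 \<inter> A2 = {}" using disjointD[OF D(3) \<open>A1 \<in> D\<close> \<open>A2 \<in> D\<close>] by simp
          moreover have "g A1 \<in> A1" "g A2 \<in> A2" using g \<open>A1 \<in> D\<close> \<open>A2 \<in> D\<close> by auto
          ultimately show False using \<open>g A1 = g A2\<close> by auto
        qed
      qed
      have AK: "A \<subseteq> K" if "A \<in> D" for A using D(4) that tS SK unfolding dense_in_def by blast
      have "g ` D \<subseteq> (\<lambda>i. x + real i) ` {..<n}"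
      proof
        fix q assume "q \<in> g ` D"
        then obtain A where A: "A \<in> D" "q = g A" by blast
        have "q \<in> K" "frac q = x" using g[OF A(1)] AK[OF A(1)] A(2) by auto
        then obtain i y where "i < n" "y \<in> C" "q = y + real i" unfolding K_def cell_def by blast
        moreover have "frac q = y" using calculation frac_shift unfolding C_def by blast
        ultimately have "q = x + real i" "i \<in> {..<n}" using \<open>frac q = x\<close> by auto
        thus "q \<in> (\<lambda>i. x + real i) ` {..<n}" by (rule image_eqI)
      qed
      hence "card (g ` D) \<le> card ((\<lambda>i. x + real i) ` {..<n})" by (simp add: card_mono)
      also have "\<dots> \<le> n" using card_image_le[of "{..<n}" "\<lambda>i. x + real i"] by simp
      finally have "card D \<le> n" using card_image[OF injg] by simp
      thus False using D(2) by simp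
    qed
  qed
qed


end
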